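(* The maps $\operatorname{st}:\mathbf{PP}[I]\to\mathbf{\Sigma}^*[I]$ and $\operatorname{st}:\mathbf{wPP}[I]\to\mathbf{w\Sigma}^*[I]$ defined on basis elements by $$\operatorname{st}(p)=\sum_{l\text{ prelinear extension of }p} l,\qquad \operatorname{st}(w,p)=\sum_{(v,l)\text{ weighted prelinear extension of }(w,p)}(v,l)$$ are morphisms of Hopf monoids.
   Context: A preposet on a finite set $I$ is a reflexive transitive relation $\le$; write $x\sim y$ if $x\le y$ and $y\le x$, and $x<y$ if $x\le y$ and $y\not\le x$; $|q|$ is the number of $\sim$-classes. A total preposet (total preorder) is identified with the ordered set partition $F_1|\cdots|F_k$ of its classes, listed increasingly. A prelinear extension of a preposet $q$ is a total preposet $l$ on $I$ such that $x\le_q y\Rightarrow x\le_l y$ and $x<_q y\Rightarrow x<_l y$ (so each class of $q$ lies in a class of $l$). A weighted preposet $(w,q)$ assigns a real weight to each class of $q$; a weighted prelinear extension $(v,l)$ of it is a prelinear extension $l$ with $v(L)=\sum_{Q\subseteq L}w(Q)$ for each class $L$ of $l$ (sum over classes $Q$ of $q$). $S\subseteq I$ is a lower ideal of $q$ if $y\in S$, $x\le_q y$ imply $x\in S$. $\mathbf{PP}[I]$ (resp. $\mathbf{wPP}[I]$) is the vector space with basis the (weighted) preposets on $I$; it is a Hopf monoid with product the disjoint union (weights carried along) and coproduct $\Delta_{S,T}(q)=q|_S\otimes q|_T$ if $S$ is a lower ideal of $q$ and $0$ otherwise (restricting weights). An ordered set partition of $I$ is a sequence $F_1|\cdots|F_k$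 of nonempty disjoint blocks with union $I$; $F|_S$ is obtained from $(F_1\cap S)|\cdots|(F_k\cap S)$ by deleting empty blocks; $H$ on $S\sqcup T$ is a quasi-shuffle of $F$ on $S$ and $G$ on $T$ if $H|_S=F$, $H|_T=G$. $\mathbf{\Sigma}^*[I]$ has basis the ordered set partitions of $I$, product $F\cdot G=\sum H$ over quasi-shuffles, and coproduct $\Delta_{S,T}(F_1|\cdots|F_k)=(F_1|\cdots|F_j)\otimes(F_{j+1}|\cdots|F_k)$ if $S=F_1\sqcup\cdots\sqcup F_j$ for some $j$, and $0$ otherwise. $\mathbf{w\Sigma}^*$ is the weighted analogue: weighted ordered set partitions, quasi-shuffles in which a merged block $F_a\sqcup G_b$ gets weight $u(F_a)+v(G_b)$ and other blocks keep their weights, and the same deconcatenation coproduct with restricted weights. *)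

theory Defs
  imports Complex_Main
begin

text \<open>An element of a vector space with basis indexed by type 'b over the
field 'k is represented by its coefficient function 'b => 'k (finitely supported).\<close>

definition supp :: "('b \<Rightarrow> 'k::zero) \<Rightarrow> 'b set" where
  "supp v = {b. v b \<noteq> 0}"

definition delta :: "'b \<Rightarrow> 'b \<Rightarrow> 'k::{zero,one}" where
  "delta b = (\<lambda>c. if c = b then 1 else 0)"

definition lin :: "('b \<Rightarrow> 'c \<Rightarrow> 'k::comm_ring_1) \<Rightarrow> ('b \<Rightarrow> 'k) \<Rightarrow> 'c \<Rightarrow> 'k" where
  "lin f v = (\<lambda>c. \<Sum>b\<in>supp v. v b * f b c)"

definition lin2 :: "('a \<Rightarrow> 'b \<Rightarrow> 'c \<Rightarrow> 'k::comm_ring_1) \<Rightarrow> ('a \<Rightarrow> 'k) \<Rightarrow> ('b \<Rightarrow> 'k) \<Rightarrow> 'c \<Rightarrow> 'k" where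
  "lin2 f u v = (\<lambda>c. \<Sum>a\<in>supp u. \<Sum>b\<in>supp v. u a * v b * f a b c)"

text \<open>Elementary tensor u (x) v, basis of the tensor product = pairs of basis elements.\<close>
definition tens :: "('a \<Rightarrow> 'k::times) \<Rightarrow> ('b \<Rightarrow> 'k) \<Rightarrow> 'a \<times> 'b \<Rightarrow> 'k" where
  "tens u v = (\<lambda>(a, b). u a * v b)"

definition preposet :: "'a set \<Rightarrow> ('a \<times> 'a) set \<Rightarrow> bool" where
  "preposet I q \<longleftrightarrow> q \<subseteq> I \<times> I \<and> (\<forall>x\<in>I. (x, x) \<in> q) \<and> trans q"

definition strict_part :: "('a \<times> 'a) set \<Rightarrow> ('a \<times> 'a) set" where
  "strict_part r = {(x, y). (x, y) \<in> r \<and> (y, x) \<notin> r}"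

definition pclass :: "('a \<times> 'a) set \<Rightarrow> 'a \<Rightarrow> 'a set" where
  "pclass q x = {y. (x, y) \<in> q \<and> (y, x) \<in> q}"

definition classes :: "'a set \<Rightarrow> ('a \<times> 'a) set \<Rightarrow> 'a set set" where
  "classes I q = pclass q ` I"

definition lower_ideal :: "('a \<times> 'a) set \<Rightarrow> 'a set \<Rightarrow> bool" where
  "lower_ideal q S \<longleftrightarrow> (\<forall>x y. y \<in> S \<longrightarrow> (x, y) \<in> q \<longrightarrow> x \<in> S)"

definition restr :: "('a \<times> 'a) set \<Rightarrow> 'a set \<Rightarrow> ('a \<times> 'a) set" where
  "restr q S = q \<inter> (S \<times> S)"

definition osp :: "'a set \<Rightarrow> 'a set list \<Rightarrow> bool" where
  "osp I F \<longleftrightarrow> (\<forall>B\<in>set F. B \<noteq> {}) \<and>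
     (\<forall>i<length F. \<forall>j<length F. i \<noteq> j \<longrightarrow> F ! i \<inter> F ! j = {}) \<and> \<Union>(set F) = I"

text \<open>The total preposet whose ordered set partition is F.\<close>
definition trel :: "'a set list \<Rightarrow> ('a \<times> 'a) set" where
  "trel F = {(x, y). \<exists>i j. i \<le> j \<and> j < length F \<and> x \<in> F ! i \<and> y \<in> F ! j}"

definition orestr :: "'a set list \<Rightarrow> 'a set \<Rightarrow> 'a set list" where
  "orestr F S = filter (\<lambda>B. B \<noteq> {}) (map (\<lambda>B. B \<inter> S) F)"

definition qshuffle :: "'a set \<Rightarrow> 'a set \<Rightarrow> 'a set list \<Rightarrow> 'a set list \<Rightarrow> 'a set list \<Rightarrow> bool" where
  "qshuffle S T F G H \<longleftrightarrow> osp (S \<union> T) H \<and> orestr H S = F \<and> orestr H T = G"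

definition prelin_ext :: "'a set \<Rightarrow> ('a \<times> 'a) set \<Rightarrow> 'a set list \<Rightarrow> bool" where
  "prelin_ext I q F \<longleftrightarrow> osp I F \<and> q \<subseteq> trel F \<and> strict_part q \<subseteq> strict_part (trel F)"

text \<open>Coproduct of PP on a basis element, an element of PP[S] (x) PP[T].\<close>
definition ppcop :: "'a set \<Rightarrow> 'a set \<Rightarrow> ('a \<times> 'a) set \<Rightarrow> (('a \<times> 'a) set \<times> ('a \<times> 'a) set) \<Rightarrow> 'k::{zero,one}" where
  "ppcop S T q = (if lower_ideal q S then delta (restr q S, restr q T) else (\<lambda>_. 0))"

text \<open>Product of Sigma* on basis elements (quasi-shuffle product).\<close>
definition sigmul :: "'a set \<Rightarrow> 'a set \<Rightarrow> 'a set list \<Rightarrow> 'a set list \<Rightarrow> 'a set list \<Rightarrow> 'k::{zero,one}" where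
  "sigmul S T F G = (\<lambda>H. if qshuffle S T F G H then 1 else 0)"

text \<open>Coproduct (deconcatenation) of Sigma* on a basis element.\<close>
definition sigcop :: "'a set \<Rightarrow> 'a set \<Rightarrow> 'a set list \<Rightarrow> ('a set list \<times> 'a set list) \<Rightarrow> 'k::{zero,one}" where
  "sigcop S T F = (\<lambda>(G, H). if F = G @ H \<and> \<Union>(set G) = S \<and> \<Union>(set H) = T then 1 else 0)"

definition st :: "'a set \<Rightarrow> ('a \<times> 'a) set \<Rightarrow> 'a set list \<Rightarrow> 'k::{zero,one}" where
  "st I p = (\<lambda>F. if prelin_ext I p F then 1 else 0)"

text \<open>Weighted preposet (w, q): w gives the weight of each class; normalised to be 0
on sets that are not classes, so that each weighted preposet has a unique representation.\<close>
definition wpreposet :: "'a set \<Rightarrow> ('a set \<Rightarrow> real) \<times> ('a \<times> 'a) set \<Rightarrow> bool" where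
  "wpreposet I wq \<longleftrightarrow> preposet I (snd wq) \<and> (\<forall>C. C \<notin> classes I (snd wq) \<longrightarrow> fst wq C = 0)"

definition wres :: "('a set \<Rightarrow> real) \<Rightarrow> 'a set \<Rightarrow> 'a set \<Rightarrow> real" where
  "wres w S = (\<lambda>C. if C \<subseteq> S then w C else 0)"

definition wppcop :: "'a set \<Rightarrow> 'a set \<Rightarrow> ('a set \<Rightarrow> real) \<times> ('a \<times> 'a) set
    \<Rightarrow> ((('a set \<Rightarrow> real) \<times> ('a \<times> 'a) set) \<times> (('a set \<Rightarrow> real) \<times> ('a \<times> 'a) set)) \<Rightarrow> 'k::{zero,one}" where
  "wppcop S T wq = (if lower_ideal (snd wq) S
     then delta ((wres (fst wq) S, restr (snd wq) S), (wres (fst wq) T, restr (snd wq) T))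
     else (\<lambda>_. 0))"

text \<open>Weighted ordered set partitions: lists of (block, weight).\<close>
definition wt :: "('a set \<times> real) list \<Rightarrow> 'a set \<Rightarrow> real" where
  "wt F X = sum_list (map snd (filter (\<lambda>(A, a). A = X) F))"

definition wqshuffle :: "'a set \<Rightarrow> 'a set \<Rightarrow> ('a set \<times> real) list \<Rightarrow> ('a set \<times> real) list
    \<Rightarrow> ('a set \<times> real) list \<Rightarrow> bool" where
  "wqshuffle S T F G H \<longleftrightarrow> qshuffle S T (map fst F) (map fst G) (map fst H) \<and>
     (\<forall>(B, c)\<in>set H. c = wt F (B \<inter> S) + wt G (B \<inter> T))"

definition wsigmul :: "'a set \<Rightarrow> 'a set \<Rightarrow> ('a set \<times> real) list \<Rightarrow> ('a set \<times> real) list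
    \<Rightarrow> ('a set \<times> real) list \<Rightarrow> 'k::{zero,one}" where
  "wsigmul S T F G = (\<lambda>H. if wqshuffle S T F G H then 1 else 0)"

definition wsigcop :: "'a set \<Rightarrow> 'a set \<Rightarrow> ('a set \<times> real) list
    \<Rightarrow> (('a set \<times> real) list \<times> ('a set \<times> real) list) \<Rightarrow> 'k::{zero,one}" where
  "wsigcop S T F = (\<lambda>(G, H). if F = G @ H \<and> \<Union>(fst ` set G) = S \<and> \<Union>(fst ` set H) = T then 1 else 0)"

definition wprelin_ext :: "'a set \<Rightarrow> ('a set \<Rightarrow> real) \<times> ('a \<times> 'a) set \<Rightarrow> ('a set \<times> real) list \<Rightarrow> bool" where
  "wprelin_ext I wq H \<longleftrightarrow> prelin_ext I (snd wq) (map fst H) \<and>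
     (\<forall>(L, c)\<in>set H. c = (\<Sum>Q\<in>{Q\<in>classes I (snd wq). Q \<subseteq> L}. fst wq Q))"

definition wst :: "'a set \<Rightarrow> ('a set \<Rightarrow> real) \<times> ('a \<times> 'a) set \<Rightarrow> ('a set \<times> real) list \<Rightarrow> 'k::{zero,one}" where
  "wst I wq = (\<lambda>H. if wprelin_ext I wq H then 1 else 0)"

text \<open>Relabelling of weights along a bijection sigma : I -> J.\<close>
definition wmap :: "('a \<Rightarrow> 'b) \<Rightarrow> 'a set \<Rightarrow> ('a set \<Rightarrow> real) \<Rightarrow> 'b set \<Rightarrow> real" where
  "wmap \<sigma> I w = (\<lambda>C. if C \<subseteq> \<sigma> ` I then w (I \<inter> \<sigma> -` C) else 0)"

end

theory Submission
  imports Defs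
begin


lemma inj_on_img_sub: "inj_on f C \<Longrightarrow> A \<subseteq> C \<Longrightarrow> B \<subseteq> C \<Longrightarrow> f ` A \<subseteq> f ` B \<longleftrightarrow> A \<subseteq> B"
  by (auto simp: inj_on_def) blast

fun ospl :: "'a set list \<Rightarrow> bool" where
  "ospl [] = True"
| "ospl (B # F) = (B \<noteq> {} \<and> B \<inter> \<Union>(set F) = {} \<and> ospl F)"

lemma disj_Cons:
  "(\<forall>i<length (B#F). \<forall>j<length (B#F). i \<noteq> j \<longrightarrow> (B#F) ! i \<inter> (B#F) ! j = {}) \<longleftrightarrow>
   (B \<inter> \<Union>(set F) = {} \<and> (\<forall>i<length F. \<forall>j<length F. i \<noteq> j \<longrightarrow> F ! i \<inter> F ! j = {}))"
proof
  assume H: "\<forall>i<length (B#F). \<forall>j<length (B#F). i \<noteq> j \<longrightarrow> (B#F) ! i \<inter> (B#F) ! j = {}"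
  have "B \<inter> \<Union>(set F) = {}"
  proof -
    { fix j assume "j < length F"
      then have "B \<inter> F ! j = {}" using H[rule_format, of 0 "Suc j"] by simp }
    note * = this
    show ?thesis
    proof (rule equals0I)
      fix x assume "x \<in> B \<inter> \<Union>(set F)"
      then obtain j where "j < length F" "x \<in> B" "x \<in> F ! j" by (auto simp: in_set_conv_nth)
      with * show False by blast
    qed
  qed
  moreover have "\<forall>i<length F. \<forall>j<length F. i \<noteq> j \<longrightarrow> F ! i \<inter> F ! j = {}"
  proof (intro allI impI)
    fix i j assume "i < length F" "j < length F" "i \<noteq> j"
    then show "F ! i \<inter> F ! j = {}" using H[rule_format, of "Suc i" "Suc j"] by simp
  qed
  ultimately show "B \<inter> \<Union>(set F) = {} \<and> (\<forall>i<length F. \<forall>j<length F. i \<noteq> j \<longrightarrow> F ! i \<inter> F ! j = {})" by blast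
next
  assume H: "B \<inter> \<Union>(set F) = {} \<and> (\<forall>i<length F. \<forall>j<length F. i \<noteq> j \<longrightarrow> F ! i \<inter> F ! j = {})"
  show "\<forall>i<length (B#F). \<forall>j<length (B#F). i \<noteq> j \<longrightarrow> (B#F) ! i \<inter> (B#F) ! j = {}"
  proof (intro allI impI)
    fix i j assume "i < length (B#F)" "j < length (B#F)" "i \<noteq> j"
    note ij = this
    show "(B#F) ! i \<inter> (B#F) ! j = {}"
    proof (cases i)
      case 0
      then obtain j' where j: "j = Suc j'" using ij by (cases j) auto
      have "F ! j' \<in> set F" using ij j by simp
      then show ?thesis using H 0 j by auto
    next
      case (Suc i')
      show ?thesis
      proof (cases j)
        case 0
        have "F ! i' \<in> set F" using ij Suc by simp
        then show ?thesis using H Suc 0 by auto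
      next
        case (Suc j')
        then show ?thesis using H ij \<open>i = Suc i'\<close> by auto
      qed
    qed
  qed
qed

lemma osp_iff: "osp I F \<longleftrightarrow> ospl F \<and> \<Union>(set F) = I"
proof (induction F arbitrary: I)
  case Nil then show ?case by (auto simp: osp_def)
next
  case (Cons B F)
  have "osp I (B#F) \<longleftrightarrow> B \<noteq> {} \<and> B \<inter> \<Union>(set F) = {} \<and> osp (\<Union>(set F)) F \<and> \<Union>(set (B#F)) = I"
    unfolding osp_def disj_Cons by auto
  then show ?case using Cons.IH[of "\<Union>(set F)"] by auto
qed

lemma ospl_distinct: "ospl F \<Longrightarrow> distinct F"
  by (induction F) auto

lemma finite_osp: "finite I \<Longrightarrow> finite {F. osp I F}"
  by (rule finite_subset[OF _ finite_subset_distinct[of "Pow I"]]) (auto simp: osp_iff ospl_distinct)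

lemma trel_Nil[simp]: "trel [] = {}" by (simp add: trel_def)

lemma trel_Cons: "trel (B # F) = B \<times> \<Union>(set (B#F)) \<union> trel F"
proof
  show "trel (B # F) \<subseteq> B \<times> \<Union>(set (B#F)) \<union> trel F"
  proof (rule subrelI)
    fix x y assume "(x, y) \<in> trel (B # F)"
    then obtain i j where ij: "i \<le> j" "j < length (B#F)" "x \<in> (B#F) ! i" "y \<in> (B#F) ! j"
      by (auto simp: trel_def)
    show "(x, y) \<in> B \<times> \<Union>(set (B#F)) \<union> trel F"
    proof (cases i)
      case 0 then show ?thesis using ij nth_mem[OF ij(2)] by auto
    next
      case (Suc i')
      then obtain j' where "j = Suc j'" using ij by (cases j) auto
      then show ?thesis using ij Suc unfolding trel_def by auto
    qed
  qed
next
  show "B \<times> \<Union>(set (B#F)) \<union> trel F \<subseteq> trel (B # F)"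
  proof (rule subrelI)
    fix x y assume "(x, y) \<in> B \<times> \<Union>(set (B#F)) \<union> trel F"
    then show "(x, y) \<in> trel (B # F)"
    proof
      assume "(x, y) \<in> B \<times> \<Union>(set (B#F))"
      then obtain C where C: "C \<in> set (B#F)" "y \<in> C" "x \<in> B" by blast
      then obtain j where "j < length (B#F)" "(B#F) ! j = C" by (metis in_set_conv_nth)
      with C have "j < length (B#F)" "y \<in> (B#F) ! j" "x \<in> B" by auto
      then show ?thesis unfolding trel_def by (intro CollectI case_prodI exI[of _ 0] exI[of _ j]) auto
    next
      assume "(x, y) \<in> trel F"
      then obtain i j where ij: "i \<le> j" "j < length F" "x \<in> F ! i" "y \<in> F ! j"
        by (auto simp: trel_def)
      then show ?thesis unfolding trel_def by (intro CollectI case_prodI exI[of _ "Suc i"] exI[of _ "Suc j"]) auto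
    qed
  qed
qed

lemma trel_append: "trel (F @ G) = trel F \<union> trel G \<union> \<Union>(set F) \<times> \<Union>(set G)"
  by (induction F) (auto simp: trel_Cons)

lemma trel_sub: "trel F \<subseteq> \<Union>(set F) \<times> \<Union>(set F)"
  by (induction F) (auto simp: trel_Cons)

lemma orestr_Nil[simp]: "orestr [] S = []" by (simp add: orestr_def)
lemma orestr_Cons: "orestr (B#F) S = (if B \<inter> S = {} then orestr F S else (B \<inter> S) # orestr F S)"
  by (simp add: orestr_def)

lemma Union_orestr: "\<Union>(set (orestr F S)) = \<Union>(set F) \<inter> S"
  by (induction F) (auto simp: orestr_Cons)

lemma ospl_orestr: "ospl F \<Longrightarrow> ospl (orestr F S)"
  by (induction F) (auto simp: orestr_Cons Union_orestr)

lemma trel_orestr: "trel (orestr F S) = trel F \<inter> S \<times> S"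
  by (induction F) (auto simp: orestr_Cons trel_Cons Union_orestr)

lemma strict_part_restr: "strict_part (r \<inter> S \<times> S) = strict_part r \<inter> S \<times> S"
  by (auto simp: strict_part_def)




lemma supp_ind[simp]: "supp (\<lambda>x. if P x then (1::'k::zero_neq_one) else 0) = {x. P x}"
  by (auto simp: supp_def)

lemma lin_ind: "lin f (\<lambda>x. if P x then (1::'k::comm_ring_1) else 0) = (\<lambda>c. \<Sum>b\<in>{x. P x}. f b c)"
  by (auto simp: lin_def intro!: sum.cong)

lemma lin_delta_ind:
  assumes fin: "finite {x. P x}" and inj: "inj_on g {x. P x}"
  shows "lin (\<lambda>b. delta (g b)) (\<lambda>x. if P x then (1::'k::comm_ring_1) else 0) = (\<lambda>c. if c \<in> g ` {x. P x} then 1 else 0)"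
proof
  fix c
  show "lin (\<lambda>b. delta (g b)) (\<lambda>x. if P x then (1::'k) else 0) c = (if c \<in> g ` {x. P x} then 1 else 0)"
  proof (cases "c \<in> g ` {x. P x}")
    case True
    then obtain b0 where b0: "P b0" "c = g b0" by auto
    have "lin (\<lambda>b. delta (g b)) (\<lambda>x. if P x then (1::'k) else 0) c = (\<Sum>b\<in>{x. P x}. if b = b0 then 1 else 0)"
      unfolding lin_ind delta_def using inj b0 by (intro sum.cong) (auto simp: inj_on_def)
    also have "\<dots> = 1" using fin b0 by (simp add: sum.delta)
    finally show ?thesis using True by simp
  next
    case False
    then show ?thesis unfolding lin_ind delta_def by (auto intro!: sum.neutral)
  qed
qed

lemma Union_map_img: "\<Union>(set (map ((`) \<sigma>) F)) = \<sigma> ` \<Union>(set F)"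
  by auto

lemma ospl_map: "inj_on \<sigma> I \<Longrightarrow> \<Union>(set F) \<subseteq> I \<Longrightarrow> ospl (map ((`) \<sigma>) F) \<longleftrightarrow> ospl F"
proof (induction F)
  case Nil then show ?case by simp
next
  case (Cons B F)
  have "\<sigma> ` B \<inter> \<sigma> ` \<Union>(set F) = \<sigma> ` (B \<inter> \<Union>(set F))"
    using inj_on_image_Int[OF Cons.prems(1), of B "\<Union>(set F)"] Cons.prems(2) by auto
  then show ?case using Cons by (simp add: image_Union[symmetric])
qed

lemma trel_map: "trel (map ((`) \<sigma>) F) = map_prod \<sigma> \<sigma> ` trel F"
  by (induction F) (auto simp: trel_Cons)

lemma strict_map:
  assumes inj: "inj_on \<sigma> I" and r: "r \<subseteq> I \<times> I"
  shows "strict_part (map_prod \<sigma> \<sigma> ` r) = map_prod \<sigma> \<sigma> ` strict_part r"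
proof -
  have *: "(\<sigma> y, \<sigma> x) \<in> map_prod \<sigma> \<sigma> ` r \<longleftrightarrow> (y, x) \<in> r" if "x \<in> I" "y \<in> I" for x y
  proof
    assume "(\<sigma> y, \<sigma> x) \<in> map_prod \<sigma> \<sigma> ` r"
    then obtain a b where ab: "(a, b) \<in> r" "\<sigma> a = \<sigma> y" "\<sigma> b = \<sigma> x" by auto
    have "a \<in> I" "b \<in> I" using ab(1) r by auto
    then have "a = y" "b = x" using ab that inj by (auto simp: inj_on_def)
    then show "(y, x) \<in> r" using ab by simp
  next
    assume "(y, x) \<in> r"
    then show "(\<sigma> y, \<sigma> x) \<in> map_prod \<sigma> \<sigma> ` r" by (rule rev_image_eqI) simp
  qed
  show ?thesis
  proof (rule set_eqI, rule iffI)
    fix z assume "z \<in> strict_part (map_prod \<sigma> \<sigma> ` r)"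
    obtain a b where ab: "z = (a, b)" by (cases z)
    with \<open>z \<in> _\<close> have ab1: "(a, b) \<in> map_prod \<sigma> \<sigma> ` r" "(b, a) \<notin> map_prod \<sigma> \<sigma> ` r"
      by (simp_all add: strict_part_def)
    from ab1(1) obtain x y where xy: "(x,y) \<in> r" "a = \<sigma> x" "b = \<sigma> y" by auto
    have z: "z = (\<sigma> x, \<sigma> y)" "(x,y) \<in> r" "(\<sigma> y, \<sigma> x) \<notin> map_prod \<sigma> \<sigma> ` r"
      using ab ab1 xy by simp_all
    have "(y,x) \<notin> r"
    proof
      assume "(y,x) \<in> r"
      hence "(\<sigma> y, \<sigma> x) \<in> map_prod \<sigma> \<sigma> ` r" by (rule rev_image_eqI) simp
      with z(3) show False by simp
    qed
    then have "(x,y) \<in> strict_part r" using z(2) by (simp add: strict_part_def)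
    then have "(\<sigma> x, \<sigma> y) \<in> map_prod \<sigma> \<sigma> ` strict_part r" by (rule rev_image_eqI) simp
    then show "z \<in> map_prod \<sigma> \<sigma> ` strict_part r" using z(1) by simp
  next
    fix z assume "z \<in> map_prod \<sigma> \<sigma> ` strict_part r"
    then obtain x y where z: "z = (\<sigma> x, \<sigma> y)" "(x,y) \<in> r" "(y,x) \<notin> r" by (auto simp: strict_part_def)
    have "x \<in> I" "y \<in> I" using r z by auto
    then have "(\<sigma> y, \<sigma> x) \<notin> map_prod \<sigma> \<sigma> ` r" using *[of x y] z(3) by simp
    moreover have "(\<sigma> x, \<sigma> y) \<in> map_prod \<sigma> \<sigma> ` r" using z(2) by (rule rev_image_eqI) simp
    ultimately show "z \<in> strict_part (map_prod \<sigma> \<sigma> ` r)" using z(1) by (simp add: strict_part_def)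
  qed
qed

lemma prelin_map:
  assumes inj: "inj_on \<sigma> I" and F: "\<Union>(set F) \<subseteq> I" and p: "p \<subseteq> I \<times> I"
  shows "prelin_ext (\<sigma> ` I) (map_prod \<sigma> \<sigma> ` p) (map ((`) \<sigma>) F) \<longleftrightarrow> prelin_ext I p F"
proof -
  have inj2: "inj_on (map_prod \<sigma> \<sigma>) (I \<times> I)" using map_prod_inj_on[OF inj inj] .
  have t: "trel F \<subseteq> I \<times> I" using trel_sub[of F] F by blast
  have st: "strict_part r \<subseteq> r" for r by (auto simp: strict_part_def)
  have "osp (\<sigma> ` I) (map ((`) \<sigma>) F) \<longleftrightarrow> osp I F"
    using ospl_map[OF inj F] inj_on_image_eq_iff[OF inj F subset_refl] by (simp add: osp_iff image_Union[symmetric])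
  moreover have "map_prod \<sigma> \<sigma> ` p \<subseteq> trel (map ((`) \<sigma>) F) \<longleftrightarrow> p \<subseteq> trel F"
    by (simp add: trel_map inj_on_img_sub[OF inj2 p t])
  moreover have "strict_part (map_prod \<sigma> \<sigma> ` p) \<subseteq> strict_part (trel (map ((`) \<sigma>) F)) \<longleftrightarrow> strict_part p \<subseteq> strict_part (trel F)"
  proof -
    have "strict_part p \<subseteq> I \<times> I" "strict_part (trel F) \<subseteq> I \<times> I" using st p t by blast+
    then show ?thesis
      by (simp add: trel_map strict_map[OF inj p] strict_map[OF inj t] inj_on_img_sub[OF inj2])
  qed
  ultimately show ?thesis by (simp add: prelin_ext_def)
qed

lemma prelin_Union: "prelin_ext I p F \<Longrightarrow> \<Union>(set F) = I"
  by (simp add: prelin_ext_def osp_iff)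

lemma finite_prelin: "finite I \<Longrightarrow> finite {F. prelin_ext I p F}"
  by (rule finite_subset[OF _ finite_osp]) (auto simp: prelin_ext_def)

lemma inj_map_img:
  assumes inj: "inj_on \<sigma> I" and A: "\<And>F. F \<in> A \<Longrightarrow> \<Union>(set F) \<subseteq> I"
  shows "inj_on (map ((`) \<sigma>)) A"
proof (rule inj_onI)
  fix F G assume FG: "F \<in> A" "G \<in> A" "map ((`) \<sigma>) F = map ((`) \<sigma>) G"
  have "inj_on ((`) \<sigma>) (set F \<union> set G)"
    by (rule inj_on_subset[OF inj_on_image_Pow[OF inj]]) (use A FG in auto)
  then show "F = G" using FG(3) inj_on_map_eq_map by blast
qed

lemma nat_st:
  assumes fI: "finite I" and bij: "bij_betw \<sigma> I J" and pre: "preposet I p"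
  shows "(st J (map_prod \<sigma> \<sigma> ` p) :: _ \<Rightarrow> 'k::field) = lin (\<lambda>F. delta (map ((`) \<sigma>) F)) (st I p)"
proof -
  have inj: "inj_on \<sigma> I" and J: "J = \<sigma> ` I" using bij by (auto simp: bij_betw_def)
  have p: "p \<subseteq> I \<times> I" using pre by (simp add: preposet_def)
  have sub: "prelin_ext I p F \<Longrightarrow> \<Union>(set F) \<subseteq> I" for F by (simp add: prelin_Union)
  have injm: "inj_on (map ((`) \<sigma>)) {F. prelin_ext I p F}"
    by (rule inj_map_img[OF inj]) (use sub in auto)
  have eq: "{F'. prelin_ext J (map_prod \<sigma> \<sigma> ` p) F'} = map ((`) \<sigma>) ` {F. prelin_ext I p F}"
  proof
    show "map ((`) \<sigma>) ` {F. prelin_ext I p F} \<subseteq> {F'. prelin_ext J (map_prod \<sigma> \<sigma> ` p) F'}"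
    proof
      fix F' assume "F' \<in> map ((`) \<sigma>) ` {F. prelin_ext I p F}"
      then obtain F where F: "prelin_ext I p F" "F' = map ((`) \<sigma>) F" by auto
      then show "F' \<in> {F'. prelin_ext J (map_prod \<sigma> \<sigma> ` p) F'}" using prelin_map[OF inj sub[OF F(1)] p] J by simp
    qed
    show "{F'. prelin_ext J (map_prod \<sigma> \<sigma> ` p) F'} \<subseteq> map ((`) \<sigma>) ` {F. prelin_ext I p F}"
    proof
      fix F' assume "F' \<in> {F'. prelin_ext J (map_prod \<sigma> \<sigma> ` p) F'}"
      hence H: "prelin_ext J (map_prod \<sigma> \<sigma> ` p) F'" by simp
      define F where "F = map (\<lambda>B. I \<inter> \<sigma> -` B) F'"
      have "\<Union>(set F') \<subseteq> \<sigma> ` I" using prelin_Union[OF H] J by auto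
      hence m: "map ((`) \<sigma>) F = F'" unfolding F_def map_map by (intro map_idI) auto
      have FI: "\<Union>(set F) \<subseteq> I" by (auto simp: F_def)
      have "prelin_ext I p F" using H m J prelin_map[OF inj FI p] by simp
      with m show "F' \<in> map ((`) \<sigma>) ` {F. prelin_ext I p F}" by blast
    qed
  qed
  show ?thesis unfolding st_def
    by (subst lin_delta_ind[OF finite_prelin[OF fI] injm]) (simp add: eq[symmetric])
qed

lemma nat_eq:
  assumes bij: "bij_betw \<sigma> I J" and pre: "preposet I p"
  shows "{F'. prelin_ext J (map_prod \<sigma> \<sigma> ` p) F'} = map ((`) \<sigma>) ` {F. prelin_ext I p F}"
proof -
  have inj: "inj_on \<sigma> I" and J: "J = \<sigma> ` I" using bij by (auto simp: bij_betw_def)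
  have p: "p \<subseteq> I \<times> I" using pre by (simp add: preposet_def)
  have sub: "prelin_ext I p F \<Longrightarrow> \<Union>(set F) \<subseteq> I" for F by (simp add: prelin_Union)
  have injm: "inj_on (map ((`) \<sigma>)) {F. prelin_ext I p F}"
    by (rule inj_map_img[OF inj]) (use sub in auto)
  have eq: "{F'. prelin_ext J (map_prod \<sigma> \<sigma> ` p) F'} = map ((`) \<sigma>) ` {F. prelin_ext I p F}"
  proof
    show "map ((`) \<sigma>) ` {F. prelin_ext I p F} \<subseteq> {F'. prelin_ext J (map_prod \<sigma> \<sigma> ` p) F'}"
    proof
      fix F' assume "F' \<in> map ((`) \<sigma>) ` {F. prelin_ext I p F}"
      then obtain F where F: "prelin_ext I p F" "F' = map ((`) \<sigma>) F" by auto
      then show "F' \<in> {F'. prelin_ext J (map_prod \<sigma> \<sigma> ` p) F'}" using prelin_map[OF inj sub[OF F(1)] p] J by simp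
    qed
    show "{F'. prelin_ext J (map_prod \<sigma> \<sigma> ` p) F'} \<subseteq> map ((`) \<sigma>) ` {F. prelin_ext I p F}"
    proof
      fix F' assume "F' \<in> {F'. prelin_ext J (map_prod \<sigma> \<sigma> ` p) F'}"
      hence H: "prelin_ext J (map_prod \<sigma> \<sigma> ` p) F'" by simp
      define F where "F = map (\<lambda>B. I \<inter> \<sigma> -` B) F'"
      have "\<Union>(set F') \<subseteq> \<sigma> ` I" using prelin_Union[OF H] J by auto
      hence m: "map ((`) \<sigma>) F = F'" unfolding F_def map_map by (intro map_idI) auto
      have FI: "\<Union>(set F) \<subseteq> I" by (auto simp: F_def)
      have "prelin_ext I p F" using H m J prelin_map[OF inj FI p] by simp
      with m show "F' \<in> map ((`) \<sigma>) ` {F. prelin_ext I p F}" by blast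
    qed
  qed
  show ?thesis by (rule eq)
qed





lemma lin2_ind: "lin2 f (\<lambda>x. if P x then (1::'k::comm_ring_1) else 0) (\<lambda>x. if Q x then 1 else 0)
   = (\<lambda>c. \<Sum>a\<in>{x. P x}. \<Sum>b\<in>{x. Q x}. f a b c)"
  by (auto simp: lin2_def intro!: sum.cong)

lemma supp_delta: "supp (delta x :: _ \<Rightarrow> 'k::zero_neq_one) = {x}"
  by (auto simp: supp_def delta_def)

lemma lin_delta: "lin f (delta x :: _ \<Rightarrow> 'k::comm_ring_1) = f x"
  by (simp add: lin_def supp_delta delta_def)

lemma lin_zero: "lin f (\<lambda>_. 0 :: 'k::comm_ring_1) = (\<lambda>_. 0)"
  by (simp add: lin_def supp_def)

lemma strict_Un: "p \<subseteq> S\<times>S \<Longrightarrow> q \<subseteq> T\<times>T \<Longrightarrow> S\<inter>T={} \<Longrightarrow> strict_part (p\<union>q) = strict_part p \<union> strict_part q"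
  by (auto simp: strict_part_def)

lemma prelin_union:
  assumes H: "osp (S\<union>T) H" and p: "p \<subseteq> S\<times>S" and q: "q \<subseteq> T\<times>T" and d: "S\<inter>T={}"
  shows "prelin_ext (S\<union>T) (p\<union>q) H \<longleftrightarrow> prelin_ext S p (orestr H S) \<and> prelin_ext T q (orestr H T)"
proof -
  have o: "osp S (orestr H S)" "osp T (orestr H T)" using H by (auto simp: osp_iff ospl_orestr Union_orestr)
  have sp: "strict_part p \<subseteq> S\<times>S" "strict_part q \<subseteq> T\<times>T" using p q by (auto simp: strict_part_def)
  show ?thesis unfolding prelin_ext_def trel_orestr strict_part_restr strict_Un[OF p q d]
    using H o p q sp by blast
qed

lemma qshuffle_count:
  assumes fS: "finite S" and fT: "finite T" and d: "S \<inter> T = {}" and p: "p \<subseteq> S\<times>S" and q: "q \<subseteq> T\<times>T"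
  shows "(\<Sum>F\<in>{F. prelin_ext S p F}. \<Sum>G\<in>{G. prelin_ext T q G}. if qshuffle S T F G H then (1::'k::comm_ring_1) else 0)
     = (if prelin_ext (S\<union>T) (p\<union>q) H then 1 else 0)"
proof (cases "osp (S\<union>T) H")
  case False then show ?thesis by (simp add: qshuffle_def prelin_ext_def)
next
  case True
  let ?A = "{F. prelin_ext S p F}" and ?B = "{G. prelin_ext T q G}"
  have "(\<Sum>F\<in>?A. \<Sum>G\<in>?B. if qshuffle S T F G H then (1::'k) else 0)
      = (\<Sum>F\<in>?A. if F = orestr H S then (\<Sum>G\<in>?B. if G = orestr H T then 1 else 0) else 0)"
    using True by (intro sum.cong refl) (auto simp: qshuffle_def intro!: sum.cong)
  also have "\<dots> = (if orestr H S \<in> ?A \<and> orestr H T \<in> ?B then 1 else 0)"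
    using finite_prelin[OF fS] finite_prelin[OF fT] by (simp add: sum.delta)
  also have "\<dots> = (if prelin_ext (S\<union>T) (p\<union>q) H then 1 else 0)"
    using prelin_union[OF True p q d] by simp
  finally show ?thesis .
qed

lemma mult_st:
  assumes fS: "finite S" and fT: "finite T" and d: "S \<inter> T = {}" and pS: "preposet S p" and pT: "preposet T q"
  shows "(st (S \<union> T) (p \<union> q) :: _ \<Rightarrow> 'k::field) = lin2 (sigmul S T) (st S p) (st T q)"
proof
  fix H
  have p: "p \<subseteq> S\<times>S" and q: "q \<subseteq> T\<times>T" using pS pT by (auto simp: preposet_def)
  let ?A = "{F. prelin_ext S p F}" and ?B = "{G. prelin_ext T q G}"
  have "lin2 (sigmul S T) (st S p) (st T q) H = (\<Sum>F\<in>?A. \<Sum>G\<in>?B. if qshuffle S T F G H then (1::'k) else 0)"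
    unfolding st_def lin2_ind sigmul_def ..
  also have "\<dots> = (if prelin_ext (S\<union>T) (p\<union>q) H then 1 else 0)"
  proof (cases "osp (S\<union>T) H")
    case False then show ?thesis by (simp add: qshuffle_def prelin_ext_def)
  next
    case True
    have "(\<Sum>F\<in>?A. \<Sum>G\<in>?B. if qshuffle S T F G H then (1::'k) else 0)
        = (\<Sum>F\<in>?A. if F = orestr H S then (\<Sum>G\<in>?B. if G = orestr H T then 1 else 0) else 0)"
      using True by (intro sum.cong refl) (auto simp: qshuffle_def intro!: sum.cong)
    also have "\<dots> = (if orestr H S \<in> ?A \<and> orestr H T \<in> ?B then 1 else 0)"
      using finite_prelin[OF fS] finite_prelin[OF fT] by (simp add: sum.delta)
    also have "\<dots> = (if prelin_ext (S\<union>T) (p\<union>q) H then 1 else 0)"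
      using prelin_union[OF True p q d] by simp
    finally show ?thesis .
  qed
  finally show "(st (S \<union> T) (p \<union> q) H :: 'k) = lin2 (sigmul S T) (st S p) (st T q) H" by (simp add: st_def)
qed

lemma ospl_append: "ospl (G @ H) \<longleftrightarrow> ospl G \<and> ospl H \<and> \<Union>(set G) \<inter> \<Union>(set H) = {}"
  by (induction G) auto

lemma strict_app: "A \<subseteq> S\<times>S \<Longrightarrow> B \<subseteq> T\<times>T \<Longrightarrow> S\<inter>T={} \<Longrightarrow>
   strict_part (A \<union> B \<union> S\<times>T) = strict_part A \<union> strict_part B \<union> S\<times>T"
  by (auto simp: strict_part_def)

lemma prelin_app:
  assumes li: "lower_ideal p S" and p: "p \<subseteq> (S\<union>T)\<times>(S\<union>T)" and d: "S\<inter>T={}"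
  shows "(prelin_ext (S\<union>T) p (G@H) \<and> \<Union>(set G) = S \<and> \<Union>(set H) = T) \<longleftrightarrow>
         prelin_ext S (restr p S) G \<and> prelin_ext T (restr p T) H"
proof -
  have pTS: "False" if "(x,y) \<in> p" "x \<in> T" "y \<in> S" for x y using li d that unfolding lower_ideal_def by blast
  have p3: "p \<subseteq> S\<times>S \<union> T\<times>T \<union> S\<times>T"
  proof (rule subrelI)
    fix x y assume "(x,y) \<in> p" then show "(x, y) \<in> S\<times>S \<union> T\<times>T \<union> S\<times>T" using p pTS by blast
  qed
  have sp: "strict_part p \<subseteq> p" by (auto simp: strict_part_def)
  show ?thesis
  proof (cases "\<Union>(set G) = S \<and> \<Union>(set H) = T")
    case False
    then show ?thesis by (auto simp: prelin_ext_def osp_iff)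
  next
    case True
    have tG: "trel G \<subseteq> S\<times>S" and tH: "trel H \<subseteq> T\<times>T" using trel_sub[of G] trel_sub[of H] True by auto
    have osp: "osp (S\<union>T) (G@H) \<longleftrightarrow> osp S G \<and> osp T H" using True d by (auto simp: osp_iff ospl_append)
    have tr: "trel (G@H) = trel G \<union> trel H \<union> S\<times>T" using True by (simp add: trel_append)
    have str: "strict_part (trel (G@H)) = strict_part (trel G) \<union> strict_part (trel H) \<union> S\<times>T"
      using strict_app[OF tG tH d] tr by simp
    have sG: "strict_part (trel G) \<subseteq> S\<times>S" "strict_part (trel H) \<subseteq> T\<times>T" using tG tH by (auto simp: strict_part_def)
    have 1: "p \<subseteq> trel (G@H) \<longleftrightarrow> p \<inter> S\<times>S \<subseteq> trel G \<and> p \<inter> T\<times>T \<subseteq> trel H"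
      unfolding tr using p3 tG tH d by blast
    have 2: "strict_part p \<subseteq> strict_part (trel (G@H)) \<longleftrightarrow>
        strict_part p \<inter> S\<times>S \<subseteq> strict_part (trel G) \<and> strict_part p \<inter> T\<times>T \<subseteq> strict_part (trel H)"
      unfolding str using sp p3 sG d by blast
    show ?thesis using True osp 1 2 unfolding prelin_ext_def restr_def strict_part_restr by blast
  qed
qed

lemma prelin_app_not:
  assumes "\<not> lower_ideal p S" "p \<subseteq> (S\<union>T)\<times>(S\<union>T)" "S\<inter>T={}"
  shows "\<not>(prelin_ext (S\<union>T) p (G@H) \<and> \<Union>(set G) = S \<and> \<Union>(set H) = T)"
proof
  assume A: "prelin_ext (S\<union>T) p (G@H) \<and> \<Union>(set G) = S \<and> \<Union>(set H) = T"
  obtain x y where xy: "y \<in> S" "(x,y) \<in> p" "x \<notin> S" using assms(1) by (auto simp: lower_ideal_def)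
  have "x \<in> T" using xy assms(2) by auto
  have "(x,y) \<in> trel G \<union> trel H \<union> \<Union>(set G) \<times> \<Union>(set H)" using A xy by (auto simp: prelin_ext_def trel_append)
  then show False using trel_sub[of G] trel_sub[of H] A xy \<open>x\<in>T\<close> assms(3) by auto
qed

lemma sum_if_conj: "finite A \<Longrightarrow> (\<Sum>F\<in>A. if F = X \<and> P then (1::'k::comm_ring_1) else 0) = (if X \<in> A \<and> P then 1 else 0)"
proof -
  assume f: "finite A"
  have "(\<Sum>F\<in>A. if F = X \<and> P then (1::'k) else 0) = (\<Sum>F\<in>A. if F = X then (if P then 1 else 0) else 0)"
    by (intro sum.cong) auto
  also have "\<dots> = (if X \<in> A \<and> P then 1 else 0)" using f by (simp add: sum.delta)
  finally show ?thesis .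
qed

lemma comult_st:
  assumes fS: "finite S" and fT: "finite T" and d: "S \<inter> T = {}" and pre: "preposet (S\<union>T) p"
  shows "(lin (sigcop S T) (st (S \<union> T) p) :: _ \<Rightarrow> 'k::field) = lin (\<lambda>(a, b). tens (st S a) (st T b)) (ppcop S T p)"
proof
  fix GH :: "'a set list \<times> 'a set list"
  obtain G H where GH: "GH = (G, H)" by (cases GH)
  have p: "p \<subseteq> (S\<union>T)\<times>(S\<union>T)" using pre by (simp add: preposet_def)
  have "lin (sigcop S T) (st (S\<union>T) p) (G,H) = (\<Sum>F\<in>{F. prelin_ext (S\<union>T) p F}. if F = G @ H \<and> (\<Union>(set G) = S \<and> \<Union>(set H) = T) then (1::'k) else 0)"
    unfolding st_def lin_ind sigcop_def by simp
  also have "\<dots> = (if prelin_ext (S\<union>T) p (G@H) \<and> \<Union>(set G) = S \<and> \<Union>(set H) = T then 1 else 0)"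
    using finite_prelin[of "S\<union>T" p] fS fT by (simp add: sum_if_conj)
  also have "\<dots> = lin (\<lambda>(a, b). tens (st S a) (st T b)) (ppcop S T p) (G,H)"
  proof (cases "lower_ideal p S")
    case True
    show ?thesis using prelin_app[OF True p d, of G H]
      by (simp add: ppcop_def True lin_delta tens_def st_def)
  next
    case False
    show ?thesis using prelin_app_not[OF False p d, of G H]
      by (simp add: ppcop_def False lin_zero)
  qed
  finally show "(lin (sigcop S T) (st (S \<union> T) p) GH :: 'k) = lin (\<lambda>(a, b). tens (st S a) (st T b)) (ppcop S T p) GH"
    using GH by simp
qed




definition W :: "'a set \<Rightarrow> ('a set \<Rightarrow> real) \<Rightarrow> ('a \<times> 'a) set \<Rightarrow> 'a set \<Rightarrow> real" where
  "W I w q L = (\<Sum>Q\<in>{Q\<in>classes I q. Q \<subseteq> L}. w Q)"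

definition mkw :: "('a set \<Rightarrow> real) \<Rightarrow> 'a set list \<Rightarrow> ('a set \<times> real) list" where
  "mkw f F = map (\<lambda>L. (L, f L)) F"

lemma map_fst_mkw[simp]: "map fst (mkw f F) = F"
  by (induction F) (auto simp: mkw_def)

lemma weights_map: "(\<forall>(L, c)\<in>set H. c = f L) \<longleftrightarrow> H = mkw f (map fst H)"
  by (induction H) (auto simp: mkw_def)

lemma wprelin_W: "wprelin_ext I (w, q) H \<longleftrightarrow> prelin_ext I q (map fst H) \<and> (\<forall>(L, c)\<in>set H. c = W I w q L)"
  by (simp add: wprelin_ext_def W_def)

lemma wprelin_iff: "wprelin_ext I (w, q) H \<longleftrightarrow> prelin_ext I q (map fst H) \<and> H = mkw (W I w q) (map fst H)"
  by (simp add: wprelin_W weights_map)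

lemma wset: "{H. wprelin_ext I (w, q) H} = mkw (W I w q) ` {F. prelin_ext I q F}"
proof
  show "{H. wprelin_ext I (w, q) H} \<subseteq> mkw (W I w q) ` {F. prelin_ext I q F}"
  proof
    fix H assume "H \<in> {H. wprelin_ext I (w, q) H}"
    then have "prelin_ext I q (map fst H)" "H = mkw (W I w q) (map fst H)" by (simp_all add: wprelin_iff)
    then show "H \<in> mkw (W I w q) ` {F. prelin_ext I q F}" by blast
  qed
  show "mkw (W I w q) ` {F. prelin_ext I q F} \<subseteq> {H. wprelin_ext I (w, q) H}"
    by (auto simp: wprelin_iff)
qed

lemma inj_mkw: "inj_on (mkw f) A"
  by (rule inj_onI) (metis map_fst_mkw)

lemma finite_wprelin: "finite I \<Longrightarrow> finite {H. wprelin_ext I (w, q) H}"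
  unfolding wset by (rule finite_imageI[OF finite_prelin])

lemma prelin_empty: "prelin_ext {} {} F \<longleftrightarrow> F = []"
proof
  assume "prelin_ext {} {} F"
  then have "ospl F" "\<Union>(set F) = {}" by (simp_all add: prelin_ext_def osp_iff)
  then show "F = []" by (cases F) auto
qed (simp add: prelin_ext_def osp_def strict_part_def)

lemma unit_st: "(st {} {} :: 'a set list \<Rightarrow> 'k::{zero,one}) = delta []"
  by (rule ext) (simp add: st_def delta_def prelin_empty)

lemma unit_wst: "(wst {} (\<lambda>_. 0, {}) :: ('a set \<times> real) list \<Rightarrow> 'k::{zero,one}) = delta []"
  by (rule ext) (simp add: wst_def delta_def wprelin_W prelin_empty)

lemma mp_iff:
  assumes inj: "inj_on \<sigma> I" and p: "p \<subseteq> I \<times> I" and xy: "x \<in> I" "y \<in> I"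
  shows "(\<sigma> x, \<sigma> y) \<in> map_prod \<sigma> \<sigma> ` p \<longleftrightarrow> (x, y) \<in> p"
proof
  assume "(\<sigma> x, \<sigma> y) \<in> map_prod \<sigma> \<sigma> ` p"
  then obtain a b where ab: "(a, b) \<in> p" "\<sigma> a = \<sigma> x" "\<sigma> b = \<sigma> y" by auto
  have "a \<in> I" "b \<in> I" using ab(1) p by auto
  then have "a = x" "b = y" using ab xy inj by (auto simp: inj_on_def)
  then show "(x, y) \<in> p" using ab by simp
next
  assume "(x, y) \<in> p"
  then show "(\<sigma> x, \<sigma> y) \<in> map_prod \<sigma> \<sigma> ` p" by (rule rev_image_eqI) simp
qed

lemma pclass_sub: "p \<subseteq> I \<times> I \<Longrightarrow> pclass p x \<subseteq> I"
  by (auto simp: pclass_def)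

lemma pclass_map:
  assumes inj: "inj_on \<sigma> I" and p: "p \<subseteq> I \<times> I" and x: "x \<in> I"
  shows "pclass (map_prod \<sigma> \<sigma> ` p) (\<sigma> x) = \<sigma> ` pclass p x"
proof (rule set_eqI, rule iffI)
  fix z assume "z \<in> pclass (map_prod \<sigma> \<sigma> ` p) (\<sigma> x)"
  then have z: "(\<sigma> x, z) \<in> map_prod \<sigma> \<sigma> ` p" "(z, \<sigma> x) \<in> map_prod \<sigma> \<sigma> ` p" by (simp_all add: pclass_def)
  from z(1) obtain a b where ab: "(a, b) \<in> p" "\<sigma> a = \<sigma> x" "\<sigma> b = z" by auto
  have b: "b \<in> I" using ab(1) p by auto
  have "(x, b) \<in> p" "(b, x) \<in> p" using z mp_iff[OF inj p x b] mp_iff[OF inj p b x] ab(3) by simp_all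
  then have "b \<in> pclass p x" by (simp add: pclass_def)
  then show "z \<in> \<sigma> ` pclass p x" using ab(3) by blast
next
  fix z assume "z \<in> \<sigma> ` pclass p x"
  then obtain y where y: "z = \<sigma> y" "(x, y) \<in> p" "(y, x) \<in> p" by (auto simp: pclass_def)
  have "y \<in> I" using y p by auto
  then show "z \<in> pclass (map_prod \<sigma> \<sigma> ` p) (\<sigma> x)"
    using y mp_iff[OF inj p x] mp_iff[OF inj p _ x] by (simp add: pclass_def)
qed

lemma classes_map:
  assumes inj: "inj_on \<sigma> I" and p: "p \<subseteq> I \<times> I"
  shows "classes (\<sigma> ` I) (map_prod \<sigma> \<sigma> ` p) = (`) \<sigma> ` classes I p"
  unfolding classes_def image_image using pclass_map[OF inj p] by (intro image_cong) auto

lemma W_map: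
  assumes inj: "inj_on \<sigma> I" and p: "p \<subseteq> I \<times> I" and L: "L \<subseteq> I"
  shows "W (\<sigma> ` I) (wmap \<sigma> I w) (map_prod \<sigma> \<sigma> ` p) (\<sigma> ` L) = W I w p L"
proof -
  let ?C = "classes I p"
  have CI: "Q \<subseteq> I" if "Q \<in> ?C" for Q using that pclass_sub[OF p] by (auto simp: classes_def)
  have injP: "inj_on ((`) \<sigma>) {Q \<in> ?C. Q \<subseteq> L}"
    by (rule inj_on_subset[OF inj_on_image_Pow[OF inj]]) (use CI in auto)
  have eq: "{Q \<in> (`) \<sigma> ` ?C. Q \<subseteq> \<sigma> ` L} = (`) \<sigma> ` {Q \<in> ?C. Q \<subseteq> L}"
  proof (rule set_eqI, rule iffI)
    fix Q' assume "Q' \<in> {Q \<in> (`) \<sigma> ` ?C. Q \<subseteq> \<sigma> ` L}"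
    then obtain Q where Q: "Q \<in> ?C" "Q' = \<sigma> ` Q" "\<sigma> ` Q \<subseteq> \<sigma> ` L" by auto
    then have "Q \<subseteq> L" using inj_on_img_sub[OF inj CI[OF Q(1)] L] by simp
    then show "Q' \<in> (`) \<sigma> ` {Q \<in> ?C. Q \<subseteq> L}" using Q by blast
  next
    fix Q' assume "Q' \<in> (`) \<sigma> ` {Q \<in> ?C. Q \<subseteq> L}"
    then show "Q' \<in> {Q \<in> (`) \<sigma> ` ?C. Q \<subseteq> \<sigma> ` L}" by auto
  qed
  have wm: "wmap \<sigma> I w (\<sigma> ` Q) = w Q" if "Q \<in> ?C" for Q
  proof -
    have "I \<inter> \<sigma> -` (\<sigma> ` Q) = Q" using CI[OF that] inj by (auto simp: inj_on_def)
    then show ?thesis by (simp add: wmap_def image_mono CI[OF that])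
  qed
  have "W (\<sigma> ` I) (wmap \<sigma> I w) (map_prod \<sigma> \<sigma> ` p) (\<sigma> ` L) = (\<Sum>Q\<in>(`) \<sigma> ` {Q \<in> ?C. Q \<subseteq> L}. wmap \<sigma> I w Q)"
    unfolding W_def classes_map[OF inj p] eq ..
  also have "\<dots> = (\<Sum>Q\<in>{Q \<in> ?C. Q \<subseteq> L}. wmap \<sigma> I w (\<sigma> ` Q))"
    using sum.reindex[OF injP] by simp
  also have "\<dots> = W I w p L" unfolding W_def using wm by (intro sum.cong) auto
  finally show ?thesis .
qed

lemma nat_wst:
  assumes fI: "finite I" and bij: "bij_betw \<sigma> I J" and wpre: "wpreposet I (w, p)"
  shows "(wst J (wmap \<sigma> I w, map_prod \<sigma> \<sigma> ` p) :: _ \<Rightarrow> 'k::field)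
       = lin (\<lambda>F. delta (map (\<lambda>(B, c). (\<sigma> ` B, c)) F)) (wst I (w, p))"
proof -
  have pre: "preposet I p" using wpre by (simp add: wpreposet_def)
  have inj: "inj_on \<sigma> I" and J: "J = \<sigma> ` I" using bij by (auto simp: bij_betw_def)
  have p: "p \<subseteq> I \<times> I" using pre by (simp add: preposet_def)
  let ?r = "\<lambda>(B::'a set, c::real). (\<sigma> ` B, c)"
  have sub: "B \<subseteq> I" if "wprelin_ext I (w, p) H" "(B, c) \<in> set H" for H B c
  proof -
    have "prelin_ext I p (map fst H)" using that(1) by (simp add: wprelin_W)
    from prelin_Union[OF this] have "\<Union>(set (map fst H)) = I" .
    moreover have "B \<in> set (map fst H)" using that(2) by force
    ultimately show ?thesis by blast
  qed
  have injm: "inj_on (map ?r) {H. wprelin_ext I (w, p) H}"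
  proof (rule inj_onI)
    fix H1 H2 assume H: "H1 \<in> {H. wprelin_ext I (w, p) H}" "H2 \<in> {H. wprelin_ext I (w, p) H}" "map ?r H1 = map ?r H2"
    have "inj_on ?r (set H1 \<union> set H2)"
    proof (rule inj_onI)
      fix x y assume xy: "x \<in> set H1 \<union> set H2" "y \<in> set H1 \<union> set H2" "?r x = ?r y"
      obtain a c where x: "x = (a, c)" by (cases x)
      obtain b d where y: "y = (b, d)" by (cases y)
      have "a \<subseteq> I" "b \<subseteq> I" using xy(1,2) H(1,2) sub x y by auto
      moreover have "\<sigma> ` a = \<sigma> ` b" "c = d" using xy(3) x y by simp_all
      ultimately show "x = y" using inj_on_image_eq_iff[OF inj] x y by simp
    qed
    then show "H1 = H2" using H(3) inj_on_map_eq_map by blast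
  qed
  have eq: "{H'. wprelin_ext J (wmap \<sigma> I w, map_prod \<sigma> \<sigma> ` p) H'} = map ?r ` {H. wprelin_ext I (w, p) H}"
  proof -
    have "{H'. wprelin_ext J (wmap \<sigma> I w, map_prod \<sigma> \<sigma> ` p) H'}
        = mkw (W J (wmap \<sigma> I w) (map_prod \<sigma> \<sigma> ` p)) ` map ((`) \<sigma>) ` {F. prelin_ext I p F}"
      unfolding wset nat_eq[OF bij pre] ..
    also have "\<dots> = map ?r ` mkw (W I w p) ` {F. prelin_ext I p F}"
      unfolding image_image
    proof (rule image_cong[OF refl])
      fix F assume "F \<in> {F. prelin_ext I p F}"
      then have FI: "L \<subseteq> I" if "L \<in> set F" for L using that prelin_Union[of I p F] by auto
      show "mkw (W J (wmap \<sigma> I w) (map_prod \<sigma> \<sigma> ` p)) (map ((`) \<sigma>) F) = map ?r (mkw (W I w p) F)"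
        unfolding mkw_def map_map J using W_map[OF inj p FI] by (auto intro!: map_cong)
    qed
    finally show ?thesis unfolding wset .
  qed
  show ?thesis unfolding wst_def
    by (subst lin_delta_ind[OF finite_wprelin[OF fI] injm]) (simp add: eq[symmetric])
qed




lemma W_empty: "preposet I q \<Longrightarrow> W I w q {} = 0"
proof -
  assume pre: "preposet I q"
  have e: "{Q\<in>classes I q. Q \<subseteq> {}} = {}"
  proof -
    { fix Q assume Q: "Q \<in> classes I q" "Q \<subseteq> {}"
      then obtain x where x: "x \<in> I" "Q = pclass q x" by (auto simp: classes_def)
      then have "x \<in> Q" using pre by (simp add: pclass_def preposet_def)
      with Q(2) have False by blast }
    then show ?thesis by blast
  qed
  show ?thesis unfolding W_def e by simp
qed

lemma pclass_union_S: "p \<subseteq> S\<times>S \<Longrightarrow> q \<subseteq> T\<times>T \<Longrightarrow> S\<inter>T={} \<Longrightarrow> x\<in>S \<Longrightarrow> pclass (p\<union>q) x = pclass p x"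
  by (auto simp: pclass_def)

lemma classes_union:
  assumes p: "p \<subseteq> S\<times>S" and q: "q \<subseteq> T\<times>T" and d: "S\<inter>T={}"
  shows "classes (S\<union>T) (p\<union>q) = classes S p \<union> classes T q"
proof -
  have 1: "pclass (p\<union>q) ` S = pclass p ` S"
    using pclass_union_S[OF p q d] by (intro image_cong) auto
  have 2: "pclass (p\<union>q) ` T = pclass q ` T"
    using pclass_union_S[OF q p, of x] d Un_commute[of p q] by (intro image_cong) (auto simp: Int_commute pclass_union_S[OF q p])
  show ?thesis unfolding classes_def image_Un 1 2 ..
qed

lemma W_union:
  assumes fS: "finite S" and fT: "finite T" and d: "S \<inter> T = {}"
    and wS: "wpreposet S (w, p)" and wT: "wpreposet T (u, q)"
  shows "W (S\<union>T) (\<lambda>C. w C + u C) (p\<union>q) B = W S w p (B\<inter>S) + W T u q (B\<inter>T)"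
proof -
  have p: "p \<subseteq> S\<times>S" and q: "q \<subseteq> T\<times>T" using wS wT by (auto simp: wpreposet_def preposet_def)
  let ?CS = "classes S p" and ?CT = "classes T q"
  have fin: "finite ?CS" "finite ?CT" using fS fT by (auto simp: classes_def)
  have w0: "w Q = 0" if "Q \<notin> ?CS" for Q using wS that by (simp add: wpreposet_def)
  have u0: "u Q = 0" if "Q \<notin> ?CT" for Q using wT that by (simp add: wpreposet_def)
  have CS: "Q \<subseteq> S" if "Q \<in> ?CS" for Q using that pclass_sub[OF p] by (auto simp: classes_def)
  have CT: "Q \<subseteq> T" if "Q \<in> ?CT" for Q using that pclass_sub[OF q] by (auto simp: classes_def)
  let ?X = "{Q \<in> ?CS \<union> ?CT. Q \<subseteq> B}"
  have fX: "finite ?X" using fin by simp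
  have "W (S\<union>T) (\<lambda>C. w C + u C) (p\<union>q) B = (\<Sum>Q\<in>?X. w Q) + (\<Sum>Q\<in>?X. u Q)"
    unfolding W_def classes_union[OF p q d] by (simp add: sum.distrib)
  also have "(\<Sum>Q\<in>?X. w Q) = (\<Sum>Q\<in>{Q\<in>?CS. Q \<subseteq> B\<inter>S}. w Q)"
  proof (rule sum.mono_neutral_right[OF fX])
    show "{Q\<in>?CS. Q \<subseteq> B\<inter>S} \<subseteq> ?X" by auto
    show "\<forall>Q\<in>?X - {Q\<in>?CS. Q \<subseteq> B\<inter>S}. w Q = 0" using CS w0 by auto
  qed
  also have "(\<Sum>Q\<in>?X. u Q) = (\<Sum>Q\<in>{Q\<in>?CT. Q \<subseteq> B\<inter>T}. u Q)"
  proof (rule sum.mono_neutral_right[OF fX])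
    show "{Q\<in>?CT. Q \<subseteq> B\<inter>T} \<subseteq> ?X" by auto
    show "\<forall>Q\<in>?X - {Q\<in>?CT. Q \<subseteq> B\<inter>T}. u Q = 0" using CT u0 by auto
  qed
  finally show ?thesis by (simp add: W_def)
qed

lemma wt_mkw: "distinct F \<Longrightarrow> wt (mkw f F) X = (if X \<in> set F then f X else 0)"
  by (induction F) (auto simp: wt_def mkw_def)

lemma set_orestr: "set (orestr F S) = (\<lambda>B. B \<inter> S) ` set F - {{}}"
  by (auto simp: orestr_def)

lemma mult_wst:
  assumes fS: "finite S" and fT: "finite T" and d: "S \<inter> T = {}"
    and wS: "wpreposet S (w, p)" and wT: "wpreposet T (u, q)"
  shows "(wst (S \<union> T) (\<lambda>C. w C + u C, p \<union> q) :: _ \<Rightarrow> 'k::field)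
     = lin2 (wsigmul S T) (wst S (w, p)) (wst T (u, q))"
proof
  fix H :: "('a set \<times> real) list"
  have pS: "preposet S p" and pT: "preposet T q" using wS wT by (simp_all add: wpreposet_def)
  have p: "p \<subseteq> S\<times>S" and q: "q \<subseteq> T\<times>T" using pS pT by (auto simp: preposet_def)
  define WS where "WS = W S w p"
  define WT where "WT = W T u q"
  define WU where "WU = W (S\<union>T) (\<lambda>C. w C + u C) (p\<union>q)"
  let ?A = "{F. prelin_ext S p F}" and ?B = "{G. prelin_ext T q G}"
  let ?H0 = "map fst H"
  have key: "wqshuffle S T (mkw WS F) (mkw WT G) H \<longleftrightarrow> qshuffle S T F G ?H0 \<and> H = mkw WU ?H0"
    if F: "F \<in> ?A" and G: "G \<in> ?B" for F G
  proof (cases "qshuffle S T F G ?H0")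
    case False then show ?thesis by (simp add: wqshuffle_def)
  next
    case True
    have FH: "F = orestr ?H0 S" and GH: "G = orestr ?H0 T" using True by (simp_all add: qshuffle_def)
    have dF: "distinct F" using F by (simp add: prelin_ext_def osp_iff ospl_distinct)
    have dG: "distinct G" using G by (simp add: prelin_ext_def osp_iff ospl_distinct)
    have wtS: "wt (mkw WS F) (B \<inter> S) = WS (B \<inter> S)" if "B \<in> set ?H0" for B
    proof (cases "B \<inter> S = {}")
      case True
      have "{} \<notin> set F" unfolding FH set_orestr by simp
      then show ?thesis using W_empty[OF pS] True by (simp add: wt_mkw[OF dF] WS_def)
    next
      case False then have "B \<inter> S \<in> set F" using that unfolding FH set_orestr by auto
      then show ?thesis by (simp add: wt_mkw[OF dF])
    qed
    have wtT: "wt (mkw WT G) (B \<inter> T) = WT (B \<inter> T)" if "B \<in> set ?H0" for B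
    proof (cases "B \<inter> T = {}")
      case True
      have "{} \<notin> set G" unfolding GH set_orestr by simp
      then show ?thesis using W_empty[OF pT] True by (simp add: wt_mkw[OF dG] WT_def)
    next
      case False then have "B \<inter> T \<in> set G" using that unfolding GH set_orestr by auto
      then show ?thesis by (simp add: wt_mkw[OF dG])
    qed
    have E: "wt (mkw WS F) (B \<inter> S) + wt (mkw WT G) (B \<inter> T) = WU B" if "(B, c) \<in> set H" for B c
    proof -
      have "B \<in> set ?H0" using that by force
      then show ?thesis using wtS wtT W_union[OF fS fT d wS wT, of B] by (simp add: WS_def WT_def WU_def)
    qed
    have "(\<forall>(B, c)\<in>set H. c = wt (mkw WS F) (B \<inter> S) + wt (mkw WT G) (B \<inter> T)) \<longleftrightarrow> (\<forall>(B, c)\<in>set H. c = WU B)"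
      using E by auto
    then show ?thesis using True by (simp add: wqshuffle_def weights_map)
  qed
  have "lin2 (wsigmul S T) (wst S (w, p)) (wst T (u, q)) H
      = (\<Sum>F\<in>mkw WS ` ?A. \<Sum>G\<in>mkw WT ` ?B. if wqshuffle S T F G H then (1::'k) else 0)"
    unfolding wst_def lin2_ind wsigmul_def wset WS_def WT_def ..
  also have "\<dots> = (\<Sum>F\<in>?A. \<Sum>G\<in>?B. if wqshuffle S T (mkw WS F) (mkw WT G) H then (1::'k) else 0)"
    by (simp add: sum.reindex inj_mkw o_def)
  also have "\<dots> = (\<Sum>F\<in>?A. \<Sum>G\<in>?B. if H = mkw WU ?H0 then (if qshuffle S T F G ?H0 then (1::'k) else 0) else 0)"
    by (intro sum.cong refl) (simp add: key)
  also have "\<dots> = (if H = mkw WU ?H0 then (\<Sum>F\<in>?A. \<Sum>G\<in>?B. if qshuffle S T F G ?H0 then (1::'k) else 0) else 0)"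
    by (cases "H = mkw WU ?H0") simp_all
  also have "\<dots> = (if H = mkw WU ?H0 \<and> prelin_ext (S\<union>T) (p\<union>q) ?H0 then 1 else 0)"
    using qshuffle_count[OF fS fT d p q, of ?H0, where 'k='k] by simp
  also have "\<dots> = wst (S\<union>T) (\<lambda>C. w C + u C, p\<union>q) H"
    unfolding wst_def wprelin_iff WU_def by auto
  finally show "(wst (S \<union> T) (\<lambda>C. w C + u C, p \<union> q) H :: 'k) = lin2 (wsigmul S T) (wst S (w, p)) (wst T (u, q)) H"
    by simp
qed

lemma cl_S: "lower_ideal p S \<Longrightarrow> x \<in> S \<Longrightarrow> pclass (restr p S) x = pclass p x"
  by (auto simp: pclass_def restr_def lower_ideal_def)

lemma cl_T:
  assumes li: "lower_ideal p S" and p: "p \<subseteq> (S\<union>T)\<times>(S\<union>T)" and d: "S\<inter>T = {}" and x: "x \<in> T"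
  shows "pclass (restr p T) x = pclass p x"
proof -
  have "y \<in> T" if "y \<in> pclass p x" for y
  proof -
    have xy: "(x, y) \<in> p" using that by (simp add: pclass_def)
    then have "y \<in> S \<union> T" using p by auto
    moreover have "y \<notin> S"
    proof
      assume "y \<in> S"
      then have "x \<in> S" using li xy by (auto simp: lower_ideal_def)
      then show False using x d by auto
    qed
    ultimately show ?thesis by auto
  qed
  then show ?thesis using x by (auto simp: pclass_def restr_def)
qed

lemma W_restr:
  assumes pre: "preposet I p" and SI: "S \<subseteq> I" and cl: "\<And>x. x \<in> S \<Longrightarrow> pclass (restr p S) x = pclass p x"
    and L: "L \<subseteq> S"
  shows "W I w p L = W S (wres w S) (restr p S) L"
proof -
  have refl: "x \<in> pclass p x" if "x \<in> I" for x using pre that by (simp add: pclass_def preposet_def)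
  have eq: "{Q\<in>classes I p. Q \<subseteq> L} = {Q\<in>classes S (restr p S). Q \<subseteq> L}"
  proof (rule set_eqI, rule iffI)
    fix Q assume "Q \<in> {Q\<in>classes I p. Q \<subseteq> L}"
    then obtain x where x: "x \<in> I" "Q = pclass p x" "Q \<subseteq> L" by (auto simp: classes_def)
    then have xS: "x \<in> S" using refl L by auto
    then have "Q = pclass (restr p S) x" using x cl by simp
    then have "Q \<in> classes S (restr p S)" unfolding classes_def using xS by blast
    then show "Q \<in> {Q\<in>classes S (restr p S). Q \<subseteq> L}" using x by simp
  next
    fix Q assume "Q \<in> {Q\<in>classes S (restr p S). Q \<subseteq> L}"
    then obtain x where x: "x \<in> S" "Q = pclass (restr p S) x" "Q \<subseteq> L" by (auto simp: classes_def)
    then have "Q = pclass p x" using cl by simp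
    then have "Q \<in> classes I p" unfolding classes_def using x SI by blast
    then show "Q \<in> {Q\<in>classes I p. Q \<subseteq> L}" using x by simp
  qed
  show ?thesis unfolding W_def eq wres_def using L by (intro sum.cong refl) auto
qed

lemma comult_wst:
  assumes fS: "finite S" and fT: "finite T" and d: "S \<inter> T = {}" and wpre: "wpreposet (S\<union>T) (w, p)"
  shows "(lin (wsigcop S T) (wst (S \<union> T) (w, p)) :: _ \<Rightarrow> 'k::field)
     = lin (\<lambda>(a, b). tens (wst S a) (wst T b)) (wppcop S T (w, p))"
proof
  fix GH :: "('a set \<times> real) list \<times> ('a set \<times> real) list"
  obtain G H where GH: "GH = (G, H)" by (cases GH)
  have pre: "preposet (S\<union>T) p" using wpre by (simp add: wpreposet_def)
  have p: "p \<subseteq> (S\<union>T)\<times>(S\<union>T)" using pre by (simp add: preposet_def)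
  have "lin (wsigcop S T) (wst (S\<union>T) (w, p)) (G, H)
      = (\<Sum>X\<in>{X. wprelin_ext (S\<union>T) (w, p) X}. if X = G @ H \<and> (\<Union>(fst ` set G) = S \<and> \<Union>(fst ` set H) = T) then (1::'k) else 0)"
    unfolding wst_def lin_ind wsigcop_def by simp
  also have "\<dots> = (if wprelin_ext (S\<union>T) (w, p) (G @ H) \<and> \<Union>(fst ` set G) = S \<and> \<Union>(fst ` set H) = T then 1 else 0)"
    using finite_wprelin[of "S\<union>T" w p] fS fT by (simp add: sum_if_conj)
  also have "\<dots> = lin (\<lambda>(a, b). tens (wst S a) (wst T b)) (wppcop S T (w, p)) (G, H)"
  proof (cases "lower_ideal p S")
    case True
    have P: "(prelin_ext (S\<union>T) p (map fst G @ map fst H) \<and> \<Union>(set (map fst G)) = S \<and> \<Union>(set (map fst H)) = T)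
        \<longleftrightarrow> prelin_ext S (restr p S) (map fst G) \<and> prelin_ext T (restr p T) (map fst H)"
      by (rule prelin_app[OF True p d])
    have WG: "(\<forall>(L, c)\<in>set G. c = W (S\<union>T) w p L) \<longleftrightarrow> (\<forall>(L, c)\<in>set G. c = W S (wres w S) (restr p S) L)"
      if "\<Union>(fst ` set G) = S"
    proof -
      have "W (S\<union>T) w p L = W S (wres w S) (restr p S) L" if "(L, c) \<in> set G" for L c
      proof -
        have L: "L \<subseteq> S" using that \<open>\<Union>(fst ` set G) = S\<close> by force
        have SI: "S \<subseteq> S \<union> T" by auto
        show ?thesis by (rule W_restr[OF pre SI cl_S[OF True] L])
      qed
      then show ?thesis by auto
    qed
    have WH: "(\<forall>(L, c)\<in>set H. c = W (S\<union>T) w p L) \<longleftrightarrow> (\<forall>(L, c)\<in>set H. c = W T (wres w T) (restr p T) L)"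
      if "\<Union>(fst ` set H) = T"
    proof -
      have "W (S\<union>T) w p L = W T (wres w T) (restr p T) L" if "(L, c) \<in> set H" for L c
      proof -
        have L: "L \<subseteq> T" using that \<open>\<Union>(fst ` set H) = T\<close> by force
        have TI: "T \<subseteq> S \<union> T" by auto
        show ?thesis by (rule W_restr[OF pre TI cl_T[OF True p d] L])
      qed
      then show ?thesis by auto
    qed
    have UG: "\<Union>(fst ` set G) = S" if "prelin_ext S (restr p S) (map fst G)"
      using prelin_Union[OF that] by simp
    have UH: "\<Union>(fst ` set H) = T" if "prelin_ext T (restr p T) (map fst H)"
      using prelin_Union[OF that] by simp
    have "(wprelin_ext (S\<union>T) (w, p) (G @ H) \<and> \<Union>(fst ` set G) = S \<and> \<Union>(fst ` set H) = T)
        \<longleftrightarrow> wprelin_ext S (wres w S, restr p S) G \<and> wprelin_ext T (wres w T, restr p T) H"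
      unfolding wprelin_W using P WG WH UG UH by (auto simp del: set_map simp add: set_map[symmetric])
    then show ?thesis by (simp add: wppcop_def True lin_delta tens_def wst_def)
  next
    case False
    have "\<not> (wprelin_ext (S\<union>T) (w, p) (G @ H) \<and> \<Union>(fst ` set G) = S \<and> \<Union>(fst ` set H) = T)"
      using prelin_app_not[OF False p d, of "map fst G" "map fst H"] by (simp add: wprelin_W)
    then show ?thesis by (simp add: wppcop_def False lin_zero)
  qed
  finally show "(lin (wsigcop S T) (wst (S \<union> T) (w, p)) GH :: 'k) = lin (\<lambda>(a, b). tens (wst S a) (wst T b)) (wppcop S T (w, p)) GH"
    using GH by simp
qed


theorem proposition3p5:
  shows
  \<comment> \<open>st : PP -> Sigma*  is a morphism of Hopf monoids\<close>
  \<comment> \<open>naturality (morphism of species)\<close>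
  "(\<forall>(I::'a set) (J::'b set) (\<sigma>::'a \<Rightarrow> 'b) p. finite I \<and> bij_betw \<sigma> I J \<and> preposet I p \<longrightarrow>
      (st J (map_prod \<sigma> \<sigma> ` p) :: 'b set list \<Rightarrow> 'k::field)
        = lin (\<lambda>F. delta (map ((`) \<sigma>) F)) (st I p)) \<and>
   \<comment> \<open>unit\<close>
   (st ({}::'a set) {} :: 'a set list \<Rightarrow> 'k) = delta [] \<and>
   \<comment> \<open>multiplicativity\<close>
   (\<forall>(S::'a set) T p q. finite S \<and> finite T \<and> S \<inter> T = {} \<and> preposet S p \<and> preposet T q \<longrightarrow>
      (st (S \<union> T) (p \<union> q) :: 'a set list \<Rightarrow> 'k) = lin2 (sigmul S T) (st S p) (st T q)) \<and>
   \<comment> \<open>comultiplicativity\<close>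
   (\<forall>(S::'a set) T p. finite S \<and> finite T \<and> S \<inter> T = {} \<and> preposet (S \<union> T) p \<longrightarrow>
      (lin (sigcop S T) (st (S \<union> T) p) :: 'a set list \<times> 'a set list \<Rightarrow> 'k)
        = lin (\<lambda>(a, b). tens (st S a) (st T b)) (ppcop S T p)) \<and>
   \<comment> \<open>st : wPP -> wSigma*  is a morphism of Hopf monoids\<close>
   (\<forall>(I::'a set) (J::'b set) (\<sigma>::'a \<Rightarrow> 'b) w p. finite I \<and> bij_betw \<sigma> I J \<and> wpreposet I (w, p) \<longrightarrow>
      (wst J (wmap \<sigma> I w, map_prod \<sigma> \<sigma> ` p) :: ('b set \<times> real) list \<Rightarrow> 'k)
        = lin (\<lambda>F. delta (map (\<lambda>(B, c). (\<sigma> ` B, c)) F)) (wst I (w, p))) \<and>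
   (wst ({}::'a set) (\<lambda>_. 0, {}) :: ('a set \<times> real) list \<Rightarrow> 'k) = delta [] \<and>
   (\<forall>(S::'a set) T w p u q. finite S \<and> finite T \<and> S \<inter> T = {} \<and> wpreposet S (w, p) \<and> wpreposet T (u, q) \<longrightarrow>
      (wst (S \<union> T) (\<lambda>C. w C + u C, p \<union> q) :: ('a set \<times> real) list \<Rightarrow> 'k)
        = lin2 (wsigmul S T) (wst S (w, p)) (wst T (u, q))) \<and>
   (\<forall>(S::'a set) T w p. finite S \<and> finite T \<and> S \<inter> T = {} \<and> wpreposet (S \<union> T) (w, p) \<longrightarrow>
      (lin (wsigcop S T) (wst (S \<union> T) (w, p)) :: ('a set \<times> real) list \<times> ('a set \<times> real) list \<Rightarrow> 'k)
        = lin (\<lambda>(a, b). tens (wst S a) (wst T b)) (wppcop S T (w, p)))"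
  apply (intro conjI)
  subgoal by (intro allI impI, elim conjE) (rule nat_st; assumption)
  subgoal by (rule unit_st)
  subgoal by (intro allI impI, elim conjE) (rule mult_st; assumption)
  subgoal by (intro allI impI, elim conjE) (rule comult_st; assumption)
  subgoal by (intro allI impI, elim conjE) (rule nat_wst; assumption)
  subgoal by (rule unit_wst)
  subgoal by (intro allI impI, elim conjE) (rule mult_wst; assumption)
  subgoal by (intro allI impI, elim conjE) (rule comult_wst; assumption)
  done

end
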